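(* For every integer $n\geq 2$, let $o_n=|\{i: K_i=1,\ 1\le i\le n\}|$ and $t_n=|\{i: K_i=2,\ 1\le i\le n\}|$. Then \[\frac14\le \frac{o_n}{t_n}\le 4 .\]
   Context: $K=(K_n)_{n\ge1}$ denotes the classical Kolakoski sequence: the unique infinite sequence over the alphabet $\{1,2\}$ with $K_1=1$ whose sequence of run lengths equals $K$ itself (a run is a maximal block of consecutive equal symbols). Its first terms are $1,2,2,1,1,2,1,2,2,1,2,2,1,1,\dots$ *)

theory Defs
  imports Complex_Main
begin

text \<open>Sequences are 1-indexed: only the values at indices n \<ge> 1 matter.
  Over the alphabet {1,2}, consecutive maximal runs alternate in symbol, so a
  sequence starting with 1 whose run-length sequence is K is exactly the
  concatenation over j = 1,2,3,... of K j copies of the symbol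
  (if odd j then 1 else 2).\<close>

definition run_start :: "(nat \<Rightarrow> nat) \<Rightarrow> nat \<Rightarrow> nat" where
  "run_start K j = (\<Sum>m\<in>{1..<j}. K m)"

definition is_kolakoski :: "(nat \<Rightarrow> nat) \<Rightarrow> bool" where
  "is_kolakoski K \<longleftrightarrow>
     (\<forall>n\<ge>1. K n \<in> {1, 2}) \<and> K 1 = 1 \<and>
     (\<forall>j\<ge>1. \<forall>i. run_start K j < i \<and> i \<le> run_start K j + K j \<longrightarrow>
                    K i = (if odd j then 1 else 2))"

definition ones_count :: "(nat \<Rightarrow> nat) \<Rightarrow> nat \<Rightarrow> nat" where
  "ones_count K n = card {i \<in> {1..n}. K i = 1}"

definition twos_count :: "(nat \<Rightarrow> nat) \<Rightarrow> nat \<Rightarrow> nat" where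
  "twos_count K n = card {i \<in> {1..n}. K i = 2}"

end

theory Submission
  imports Defs
begin

lemma ones_Suc: "ones_count K (Suc n) = ones_count K n + (if K (Suc n) = 1 then 1 else 0)"
proof -
  have "{i \<in> {1..Suc n}. K i = 1} = (if K (Suc n) = 1 then insert (Suc n) {i \<in> {1..n}. K i = 1} else {i \<in> {1..n}. K i = 1})"
    by (auto simp: le_Suc_eq)
  then show ?thesis unfolding ones_count_def by simp
qed

lemma twos_Suc: "twos_count K (Suc n) = twos_count K n + (if K (Suc n) = 2 then 1 else 0)"
proof -
  have "{i \<in> {1..Suc n}. K i = 2} = (if K (Suc n) = 2 then insert (Suc n) {i \<in> {1..n}. K i = 2} else {i \<in> {1..n}. K i = 2})"
    by (auto simp: le_Suc_eq)
  then show ?thesis unfolding twos_count_def by simp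
qed

lemma rs_Suc: "j \<ge> 1 \<Longrightarrow> run_start K (Suc j) = run_start K j + K j"
  unfolding run_start_def by (simp add: sum.atLeastLessThan_Suc)

lemma inv:
  assumes kol: "is_kolakoski K" and n: "n \<ge> 1"
  shows "\<exists>j\<ge>1. run_start K j < n \<and> n \<le> run_start K j + K j \<and>
    ones_count K n \<le> 2*(j div 2) + (if odd j then n - run_start K j else 0) \<and>
    ones_count K n \<ge> j div 2 + (if odd j then n - run_start K j else 0) \<and>
    twos_count K n \<le> 2*((j-1) div 2) + (if even j then n - run_start K j else 0) \<and>
    twos_count K n \<ge> (j-1) div 2 + (if even j then n - run_start K j else 0)"
  using n
proof (induction n rule: dec_induct)
  case base
  have K1: "K 1 = 1" using kol unfolding is_kolakoski_def by simp
  have rs1: "run_start K 1 = 0" unfolding run_start_def by simp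
  have o: "ones_count K 1 = 1" unfolding ones_count_def using K1
    by (simp add: Collect_conv_if)
  have t: "twos_count K 1 = 0" unfolding twos_count_def using K1
    by (simp add: Collect_conv_if)
  show ?case by (rule exI[of _ 1]) (simp only: rs1 K1 o t, simp)
next
  case (step n)
  then obtain j where j: "j \<ge> 1" "run_start K j < n" "n \<le> run_start K j + K j"
    "ones_count K n \<le> 2*(j div 2) + (if odd j then n - run_start K j else 0)"
    "ones_count K n \<ge> j div 2 + (if odd j then n - run_start K j else 0)"
    "twos_count K n \<le> 2*((j-1) div 2) + (if even j then n - run_start K j else 0)"
    "twos_count K n \<ge> (j-1) div 2 + (if even j then n - run_start K j else 0)" by blast
  have Kr: "\<And>m. m \<ge> 1 \<Longrightarrow> K m \<in> {1,2}" using kol unfolding is_kolakoski_def by simp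
  have run: "\<And>j i. j \<ge> 1 \<Longrightarrow> run_start K j < i \<Longrightarrow> i \<le> run_start K j + K j \<Longrightarrow> K i = (if odd j then 1 else 2)"
    using kol unfolding is_kolakoski_def by blast
  show ?case
  proof (cases "Suc n \<le> run_start K j + K j")
    case True
    have "K (Suc n) = (if odd j then 1 else 2)" using run[OF j(1)] j(2) True by simp
    hence o': "ones_count K (Suc n) = ones_count K n + (if odd j then 1 else 0)"
      and t': "twos_count K (Suc n) = twos_count K n + (if odd j then 0 else 1)"
      by (auto simp: ones_Suc twos_Suc)
    have sd: "Suc n - run_start K j = Suc (n - run_start K j)" using j(2) by simp
    show ?thesis
      apply (rule exI[of _ j])
      unfolding o' t' sd using j(1-7) True by (cases "odd j") simp_all
  next
    case False
    hence nn: "n = run_start K j + K j" using j(3) by simp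
    have rsS: "run_start K (Suc j) = n" using rs_Suc[OF j(1)] nn by simp
    have Kj: "K j \<in> {1,2}" using Kr j(1) by simp
    have KS: "K (Suc j) \<in> {1,2}" using Kr by simp
    have "K (Suc n) = (if odd (Suc j) then 1 else 2)"
      using run[of "Suc j" "Suc n"] rsS KS by auto
    hence o': "ones_count K (Suc n) = ones_count K n + (if odd (Suc j) then 1 else 0)"
      and t': "twos_count K (Suc n) = twos_count K n + (if odd (Suc j) then 0 else 1)"
      by (auto simp: ones_Suc twos_Suc)
    have dj: "n - run_start K j = K j" using nn by simp
    have KS1: "K (Suc j) \<ge> 1" using KS by auto
    have A: "ones_count K n \<le> 2*(j div 2) + (if odd j then K j else 0)"
      "ones_count K n \<ge> j div 2 + (if odd j then K j else 0)"
      "twos_count K n \<le> 2*((j-1) div 2) + (if even j then K j else 0)"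
      "twos_count K n \<ge> (j-1) div 2 + (if even j then K j else 0)"
      using j(4-7) unfolding dj by auto
    show ?thesis
    proof (cases "even j")
      case True
      then obtain k where k: "j = 2*k" by blast
      have kd: "j div 2 = k" "(j-1) div 2 = k - 1" "Suc j div 2 = k" "(Suc j - 1) div 2 = k" using k j(1) by auto
      have par: "odd (Suc j)" using True by simp
      have k1: "k \<ge> 1" using k j(1) by simp
      show ?thesis apply (rule exI[of _ "Suc j"]) using par k1 A Kj KS1 j(1) True unfolding rsS o' t' kd by (simp; arith)
    next
      case False
      then obtain k where k: "j = 2*k+1" using oddE by blast
      have kd: "j div 2 = k" "(j-1) div 2 = k" "Suc j div 2 = Suc k" "(Suc j - 1) div 2 = k" using k by auto
      have par: "even (Suc j)" using False by simp
      show ?thesis apply (rule exI[of _ "Suc j"]) using par A Kj KS1 j(1) False unfolding rsS o' t' kd by (simp; arith)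
    qed

  qed
qed

theorem mainTheorem1:
  fixes K :: "nat \<Rightarrow> nat" and n :: nat
  assumes "is_kolakoski K" and "n \<ge> 2"
  shows "1 / 4 \<le> real (ones_count K n) / real (twos_count K n)
         \<and> real (ones_count K n) / real (twos_count K n) \<le> 4"
proof -
  obtain j where j: "j \<ge> 1" "run_start K j < n" "n \<le> run_start K j + K j"
    "ones_count K n \<le> 2*(j div 2) + (if odd j then n - run_start K j else 0)"
    "ones_count K n \<ge> j div 2 + (if odd j then n - run_start K j else 0)"
    "twos_count K n \<le> 2*((j-1) div 2) + (if even j then n - run_start K j else 0)"
    "twos_count K n \<ge> (j-1) div 2 + (if even j then n - run_start K j else 0)"
    using inv[OF assms(1), of n] assms(2) by auto
  have Kj: "K j \<in> {1,2}" using assms(1) j(1) unfolding is_kolakoski_def by simp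
  have "j \<noteq> 1"
  proof
    assume "j = 1"
    moreover have "K 1 = 1" using assms(1) unfolding is_kolakoski_def by simp
    moreover have "run_start K 1 = 0" unfolding run_start_def by simp
    ultimately show False using j(3) assms(2) by simp
  qed
  hence j2: "j \<ge> 2" using j(1) by simp
  define d where "d = n - run_start K j"
  have d: "d \<ge> 1" "d \<le> 2" using j(2,3) Kj unfolding d_def by auto
  define oo where "oo = ones_count K n"
  define t where "t = twos_count K n"
  have B: "oo \<le> 2*(j div 2) + (if odd j then d else 0)"
    "oo \<ge> j div 2 + (if odd j then d else 0)"
    "t \<le> 2*((j-1) div 2) + (if even j then d else 0)"
    "t \<ge> (j-1) div 2 + (if even j then d else 0)"
    using j(4-7) unfolding oo_def t_def d_def by auto
  have b: "t \<le> 4*oo \<and> oo \<le> 4*t \<and> t \<ge> 1"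
  proof (cases "even j")
    case True
    then obtain k where k: "j = 2*k" by blast
    have kd: "j div 2 = k" "(j-1) div 2 = k - 1" using k by auto
    show ?thesis using B True d j2 unfolding kd k by auto
  next
    case False
    then obtain k where k: "j = 2*k+1" using oddE by blast
    have kd: "j div 2 = k" "(j-1) div 2 = k" using k by auto
    show ?thesis using B False d j2 unfolding kd k by auto
  qed
  have tp: "real t > 0" using b by simp
  have "real t \<le> 4 * real oo" "real oo \<le> 4 * real t" using b by auto
  then show ?thesis using tp unfolding oo_def[symmetric] t_def[symmetric]
    by (simp add: divide_simps)
qed

end
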